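(* Assume successive states are independent and identically distributed according to $m$. For every $\delta\in(0,1)$, the set $NE^b_\delta$ of Nash equilibrium payoffs of the $\delta$-discounted blind game is a subset of the set $NE_\delta$ of Nash equilibrium payoffs of the $\delta$-discounted (non-blind) game.
   Context: The (non-blind) game: finite sets $S$ (states), $A=S$ (messages), $B$ (receiver actions); payoff $u=(u^1,u^2):S\times B\to\mathbb{R}^2$ (player 1 = sender, player 2 = receiver); states $s_1,s_2,\dots$ in $S$. At each stage $n$ the sender observes $s_n$ and announces $a_n\in A$; the receiver observes $a_n$ and chooses $b_n\in B$; $b_n$ is publicly disclosed; payoffs are not observed. Sender strategies are maps $\sigma:\bigcup_{n\ge0}(S\times A\times B)^n\times S\to\Delta(A)$, receiver strategies maps $\tau:\bigcup_{n\ge0}(A\times B)^n\to\Delta(B)$, and payoffs are $\mathbf{E}_{\sigma,\tau}[\sum_{n\ge1}(1-\delta)\delta^{n-1}u(s_n,b_n)]$. The blind game is identical except that the sender does not observe the receiver's actions: sender strategies are maps $\sigma:\bigcup_{n\ge0}(S\times A)^n\times S\to\Delta(A)$. *)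

theory Defs
  imports "HOL-Probability.Probability"
begin

text \<open>Sender-receiver game. States and messages have type 's (A = S),
receiver actions have type 'b. A full history of n stages is the list
[(s_1,a_1,b_1), ..., (s_n,a_n,b_n)].\<close>

type_synonym ('s,'b) sender = "('s \<times> 's \<times> 'b) list \<Rightarrow> 's \<Rightarrow> 's pmf"
type_synonym 's blind_sender = "('s \<times> 's) list \<Rightarrow> 's \<Rightarrow> 's pmf"
type_synonym ('s,'b) receiver = "('s \<times> 'b) list \<Rightarrow> 's \<Rightarrow> 'b pmf"

definition recv_view :: "('s \<times> 's \<times> 'b) list \<Rightarrow> ('s \<times> 'b) list" where
  "recv_view h = map (\<lambda>(s,a,b). (a,b)) h"

definition blind_view :: "('s \<times> 's \<times> 'b) list \<Rightarrow> ('s \<times> 's) list" where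
  "blind_view h = map (\<lambda>(s,a,b). (s,a)) h"

primrec hist :: "'s pmf \<Rightarrow> ('s,'b) sender \<Rightarrow> ('s,'b) receiver \<Rightarrow> nat \<Rightarrow> ('s \<times> 's \<times> 'b) list pmf" where
  "hist m \<sigma> \<tau> 0 = return_pmf []"
| "hist m \<sigma> \<tau> (Suc n) =
     bind_pmf (hist m \<sigma> \<tau> n) (\<lambda>h. bind_pmf m (\<lambda>s. bind_pmf (\<sigma> h s) (\<lambda>a.
        map_pmf (\<lambda>b. h @ [(s,a,b)]) (\<tau> (recv_view h) a))))"

text \<open>Discounted payoff E[sum_{n>=1} (1-delta) delta^(n-1) f(s_n,b_n)],
  written as the sum of the stage expectations (payoffs are bounded).\<close>
definition disc_payoff :: "'s pmf \<Rightarrow> ('s,'b) sender \<Rightarrow> ('s,'b) receiver \<Rightarrow> real \<Rightarrow> ('s \<Rightarrow> 'b \<Rightarrow> real) \<Rightarrow> real" where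
  "disc_payoff m \<sigma> \<tau> \<delta> f =
     (\<Sum>n. (1 - \<delta>) * \<delta> ^ n *
        measure_pmf.expectation (hist m \<sigma> \<tau> (Suc n)) (\<lambda>h. case last h of (s,a,b) \<Rightarrow> f s b))"

definition lift_blind :: "'s blind_sender \<Rightarrow> ('s,'b) sender" where
  "lift_blind \<sigma> h s = \<sigma> (blind_view h) s"

definition is_NE :: "'s pmf \<Rightarrow> ('s \<Rightarrow> 'b \<Rightarrow> real) \<Rightarrow> ('s \<Rightarrow> 'b \<Rightarrow> real) \<Rightarrow> real
     \<Rightarrow> ('s,'b) sender \<Rightarrow> ('s,'b) receiver \<Rightarrow> bool" where
  "is_NE m u1 u2 \<delta> \<sigma> \<tau> \<longleftrightarrow>
     (\<forall>\<sigma>'. disc_payoff m \<sigma>' \<tau> \<delta> u1 \<le> disc_payoff m \<sigma> \<tau> \<delta> u1) \<and>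
     (\<forall>\<tau>'. disc_payoff m \<sigma> \<tau>' \<delta> u2 \<le> disc_payoff m \<sigma> \<tau> \<delta> u2)"

definition NE_payoffs :: "'s pmf \<Rightarrow> ('s \<Rightarrow> 'b \<Rightarrow> real) \<Rightarrow> ('s \<Rightarrow> 'b \<Rightarrow> real) \<Rightarrow> real \<Rightarrow> (real \<times> real) set" where
  "NE_payoffs m u1 u2 \<delta> =
     {(disc_payoff m \<sigma> \<tau> \<delta> u1, disc_payoff m \<sigma> \<tau> \<delta> u2) | \<sigma> \<tau>. is_NE m u1 u2 \<delta> \<sigma> \<tau>}"

definition is_NE_blind :: "'s pmf \<Rightarrow> ('s \<Rightarrow> 'b \<Rightarrow> real) \<Rightarrow> ('s \<Rightarrow> 'b \<Rightarrow> real) \<Rightarrow> real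
     \<Rightarrow> 's blind_sender \<Rightarrow> ('s,'b) receiver \<Rightarrow> bool" where
  "is_NE_blind m u1 u2 \<delta> \<sigma> \<tau> \<longleftrightarrow>
     (\<forall>\<sigma>'. disc_payoff m (lift_blind \<sigma>') \<tau> \<delta> u1 \<le> disc_payoff m (lift_blind \<sigma>) \<tau> \<delta> u1) \<and>
     (\<forall>\<tau>'. disc_payoff m (lift_blind \<sigma>) \<tau>' \<delta> u2 \<le> disc_payoff m (lift_blind \<sigma>) \<tau> \<delta> u2)"

definition NE_blind_payoffs :: "'s pmf \<Rightarrow> ('s \<Rightarrow> 'b \<Rightarrow> real) \<Rightarrow> ('s \<Rightarrow> 'b \<Rightarrow> real) \<Rightarrow> real \<Rightarrow> (real \<times> real) set" where
  "NE_blind_payoffs m u1 u2 \<delta> =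
     {(disc_payoff m (lift_blind \<sigma>) \<tau> \<delta> u1, disc_payoff m (lift_blind \<sigma>) \<tau> \<delta> u2) | \<sigma> \<tau>.
        is_NE_blind m u1 u2 \<delta> \<sigma> \<tau>}"

end

theory Submission
  imports Defs
begin


lemma disint: "bind_pmf (map_pmf f q) (\<lambda>y. cond_pmf q {x. f x = y}) = q"
  by (rule bind_cond_pmf_cancel) (auto simp: measure_pmf_single[symmetric] measure_map_pmf vimage_def)

lemma bv_snoc[simp]: "blind_view (h @ [(s,a,b)]) = blind_view h @ [(s,a)]"
  by (simp add: blind_view_def)
lemma rv_snoc[simp]: "recv_view (h @ [(s,a,b)]) = recv_view h @ [(a,b)]"
  by (simp add: recv_view_def)
lemma bv_len[simp]: "length (blind_view h) = length h" by (simp add: blind_view_def)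
lemma rv_bv: "map fst (recv_view h) = map snd (blind_view h)"
  by (induction h) (auto simp: recv_view_def blind_view_def)

lemma hist_len: "h \<in> set_pmf (hist m \<sigma> \<tau> n) \<Longrightarrow> length h = n"
  by (induction n arbitrary: h) auto



definition kuhn :: "'s pmf \<Rightarrow> ('s,'b) sender \<Rightarrow> ('s,'b) receiver \<Rightarrow> 's blind_sender" where
  "kuhn m \<sigma> \<rho> g s = (let p = hist m \<sigma> \<rho> (length g) in
     if set_pmf p \<inter> {h. blind_view h = g} \<noteq> {} then bind_pmf (cond_pmf p {h. blind_view h = g}) (\<lambda>h. \<sigma> h s)
     else return_pmf s)"

lemma generic:
  assumes IH: "map_pmf blind_view (hist m \<sigma> \<rho> n) = map_pmf blind_view (hist m (lift_blind (kuhn m \<sigma> \<rho>)) \<rho> n)"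
  shows "bind_pmf (hist m \<sigma> \<rho> n) (\<lambda>h. bind_pmf m (\<lambda>s. bind_pmf (\<sigma> h s) (\<lambda>a. G (blind_view h) s a)))
       = bind_pmf (hist m (lift_blind (kuhn m \<sigma> \<rho>)) \<rho> n) (\<lambda>h. bind_pmf m (\<lambda>s. bind_pmf (kuhn m \<sigma> \<rho> (blind_view h) s) (\<lambda>a. G (blind_view h) s a)))"
proof -
  let ?H = "hist m \<sigma> \<rho> n"
  let ?K = "\<lambda>h. bind_pmf m (\<lambda>s. bind_pmf (\<sigma> h s) (\<lambda>a. G (blind_view h) s a))"
  have "bind_pmf ?H ?K = bind_pmf (bind_pmf (map_pmf blind_view ?H) (\<lambda>g. cond_pmf ?H {x. blind_view x = g})) ?K"
    by (simp add: disint)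
  also have "\<dots> = bind_pmf (map_pmf blind_view ?H) (\<lambda>g. bind_pmf (cond_pmf ?H {x. blind_view x = g}) ?K)"
    by (simp add: bind_assoc_pmf)
  also have "\<dots> = bind_pmf (map_pmf blind_view ?H) (\<lambda>g. bind_pmf m (\<lambda>s. bind_pmf (kuhn m \<sigma> \<rho> g s) (\<lambda>a. G g s a)))"
  proof (rule bind_pmf_cong[OF refl])
    fix g assume g: "g \<in> set_pmf (map_pmf blind_view ?H)"
    then obtain h0 where h0: "h0 \<in> set_pmf ?H" "g = blind_view h0" by auto
    have len: "length g = n" using h0 hist_len by auto
    have ne: "set_pmf ?H \<inter> {h. blind_view h = g} \<noteq> {}" using h0 by auto
    have "bind_pmf (cond_pmf ?H {x. blind_view x = g}) ?K
        = bind_pmf (cond_pmf ?H {x. blind_view x = g}) (\<lambda>h. bind_pmf m (\<lambda>s. bind_pmf (\<sigma> h s) (\<lambda>a. G g s a)))"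
      by (rule bind_pmf_cong) (use ne in auto)
    also have "\<dots> = bind_pmf m (\<lambda>s. bind_pmf (bind_pmf (cond_pmf ?H {x. blind_view x = g}) (\<lambda>h. \<sigma> h s)) (\<lambda>a. G g s a))"
      by (simp add: bind_assoc_pmf bind_commute_pmf[of "cond_pmf _ _" m])
    also have "\<dots> = bind_pmf m (\<lambda>s. bind_pmf (kuhn m \<sigma> \<rho> g s) (\<lambda>a. G g s a))"
      using ne len by (simp add: kuhn_def Let_def)
    finally show "bind_pmf (cond_pmf ?H {x. blind_view x = g}) ?K = bind_pmf m (\<lambda>s. bind_pmf (kuhn m \<sigma> \<rho> g s) (\<lambda>a. G g s a))" .
  qed
  also have "\<dots> = bind_pmf (map_pmf blind_view (hist m (lift_blind (kuhn m \<sigma> \<rho>)) \<rho> n)) (\<lambda>g. bind_pmf m (\<lambda>s. bind_pmf (kuhn m \<sigma> \<rho> g s) (\<lambda>a. G g s a)))"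
    by (simp add: IH)
  finally show ?thesis by (simp add: bind_map_pmf)
qed

lemma bv_eq: "map_pmf blind_view (hist m \<sigma> \<rho> n) = map_pmf blind_view (hist m (lift_blind (kuhn m \<sigma> \<rho>)) \<rho> n)"
proof (induction n)
  case 0 then show ?case by simp
next
  case (Suc n)
  have "map_pmf blind_view (hist m \<sigma> \<rho> (Suc n)) = bind_pmf (hist m \<sigma> \<rho> n) (\<lambda>h. bind_pmf m (\<lambda>s. bind_pmf (\<sigma> h s) (\<lambda>a. return_pmf (blind_view h @ [(s,a)]))))"
    by (simp add: map_bind_pmf map_pmf_comp)
  also have "\<dots> = bind_pmf (hist m (lift_blind (kuhn m \<sigma> \<rho>)) \<rho> n) (\<lambda>h. bind_pmf m (\<lambda>s. bind_pmf (kuhn m \<sigma> \<rho> (blind_view h) s) (\<lambda>a. return_pmf (blind_view h @ [(s,a)]))))"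
    by (rule generic[OF Suc])
  also have "\<dots> = map_pmf blind_view (hist m (lift_blind (kuhn m \<sigma> \<rho>)) \<rho> (Suc n))"
    by (simp add: map_bind_pmf map_pmf_comp lift_blind_def)
  finally show ?case .
qed

definition proj :: "('s \<times> 's \<times> 'b) list \<Rightarrow> 's \<times> 'b" where
  "proj h = (case last h of (s,a,b) \<Rightarrow> (s,b))"

lemma proj_snoc[simp]: "proj (h @ [(s,a,b)]) = (s,b)" by (simp add: proj_def)

lemma proj_B:
  assumes R: "\<And>ab a. \<rho> ab a = R (map fst ab) a"
  shows "map_pmf proj (hist m \<sigma> \<rho> (Suc n)) = map_pmf proj (hist m (lift_blind (kuhn m \<sigma> \<rho>)) \<rho> (Suc n))"
proof -
  have "map_pmf proj (hist m \<sigma> \<rho> (Suc n)) = bind_pmf (hist m \<sigma> \<rho> n) (\<lambda>h. bind_pmf m (\<lambda>s. bind_pmf (\<sigma> h s) (\<lambda>a. map_pmf (\<lambda>b. (s,b)) (R (map snd (blind_view h)) a))))"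
    by (simp add: map_bind_pmf map_pmf_comp R rv_bv)
  also have "\<dots> = bind_pmf (hist m (lift_blind (kuhn m \<sigma> \<rho>)) \<rho> n) (\<lambda>h. bind_pmf m (\<lambda>s. bind_pmf (kuhn m \<sigma> \<rho> (blind_view h) s) (\<lambda>a. map_pmf (\<lambda>b. (s,b)) (R (map snd (blind_view h)) a))))"
    by (rule generic[OF bv_eq])
  also have "\<dots> = map_pmf proj (hist m (lift_blind (kuhn m \<sigma> \<rho>)) \<rho> (Suc n))"
    by (simp add: map_bind_pmf map_pmf_comp R rv_bv lift_blind_def)
  finally show ?thesis .
qed



primrec bs :: "('s,'b) receiver \<Rightarrow> 's list \<Rightarrow> nat \<Rightarrow> 'b list pmf" where
  "bs \<tau> as 0 = return_pmf []"
| "bs \<tau> as (Suc n) = bind_pmf (bs \<tau> as n) (\<lambda>bl. map_pmf (\<lambda>b. bl @ [b]) (\<tau> (zip (take n as) bl) (as ! n)))"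

primrec Bl :: "'s pmf \<Rightarrow> 's blind_sender \<Rightarrow> nat \<Rightarrow> ('s \<times> 's) list pmf" where
  "Bl m \<sigma> 0 = return_pmf []"
| "Bl m \<sigma> (Suc n) = bind_pmf (Bl m \<sigma> n) (\<lambda>g. bind_pmf m (\<lambda>s. map_pmf (\<lambda>a. g @ [(s,a)]) (\<sigma> g s)))"

definition mk :: "('s \<times> 's) list \<Rightarrow> 'b list \<Rightarrow> ('s \<times> 's \<times> 'b) list" where
  "mk g bl = map (\<lambda>((s,a),b). (s,a,b)) (zip g bl)"

definition rho :: "('s,'b) receiver \<Rightarrow> ('s,'b) receiver" where
  "rho \<tau> ab a = map_pmf last (bs \<tau> (map fst ab @ [a]) (Suc (length ab)))"

lemma bs_len: "bl \<in> set_pmf (bs \<tau> as n) \<Longrightarrow> length bl = n"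
  by (induction n arbitrary: bl) auto
lemma Bl_len: "g \<in> set_pmf (Bl m \<sigma> n) \<Longrightarrow> length g = n"
  by (induction n arbitrary: g) auto

lemma bs_take: "bs \<tau> as n = bs \<tau> (take n as) n"
proof (induction n arbitrary: as)
  case 0 then show ?case by simp
next
  case (Suc n)
  have "bs \<tau> (take (Suc n) as) n = bs \<tau> as n"
    using Suc.IH[of "take (Suc n) as"] Suc.IH[of as] by (simp add: min_def)
  then show ?case
    by (cases "n < length as") (auto simp: min_def)
qed

lemma bs_app: "length as = n \<Longrightarrow> bs \<tau> (as @ xs) n = bs \<tau> as n"
  by (subst bs_take) simp

lemma bs_snoc: "length as = n \<Longrightarrow> bs \<tau> (as @ [a]) (Suc n) = bind_pmf (bs \<tau> as n) (\<lambda>bl. map_pmf (\<lambda>b. bl @ [b]) (\<tau> (zip as bl) a))"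
  using bs_take[of \<tau> "as @ [a]" n] by (simp add: nth_append)

lemma mk_facts:
  assumes "length g = length bl"
  shows "blind_view (mk g bl) = g" "recv_view (mk g bl) = zip (map snd g) bl"
        "mk (g @ [(s,a)]) (bl @ [b]) = mk g bl @ [(s,a,b)]"
  using assms
  by (induction g bl rule: list_induct2) (auto simp: mk_def blind_view_def recv_view_def)

lemma hist_blind: "hist m (lift_blind \<sigma>) \<tau> n = bind_pmf (Bl m \<sigma> n) (\<lambda>g. map_pmf (mk g) (bs \<tau> (map snd g) n))"
proof (induction n)
  case 0 then show ?case by (simp add: mk_def)
next
  case (Suc n)
  have "hist m (lift_blind \<sigma>) \<tau> (Suc n) = bind_pmf (Bl m \<sigma> n) (\<lambda>g. bind_pmf (bs \<tau> (map snd g) n) (\<lambda>bl.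
      bind_pmf m (\<lambda>s. bind_pmf (\<sigma> (blind_view (mk g bl)) s) (\<lambda>a. map_pmf (\<lambda>b. mk g bl @ [(s,a,b)]) (\<tau> (recv_view (mk g bl)) a)))))"
    by (simp add: Suc bind_assoc_pmf bind_map_pmf lift_blind_def)
  also have "\<dots> = bind_pmf (Bl m \<sigma> n) (\<lambda>g. bind_pmf (bs \<tau> (map snd g) n) (\<lambda>bl.
      bind_pmf m (\<lambda>s. bind_pmf (\<sigma> g s) (\<lambda>a. map_pmf (\<lambda>b. mk (g @ [(s,a)]) (bl @ [b])) (\<tau> (zip (map snd g) bl) a)))))"
    by (intro bind_pmf_cong refl) (auto simp: mk_facts Bl_len bs_len)
  also have "\<dots> = bind_pmf (Bl m \<sigma> n) (\<lambda>g. bind_pmf m (\<lambda>s. bind_pmf (\<sigma> g s) (\<lambda>a. bind_pmf (bs \<tau> (map snd g) n) (\<lambda>bl.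
      map_pmf (\<lambda>b. mk (g @ [(s,a)]) (bl @ [b])) (\<tau> (zip (map snd g) bl) a)))))"
    apply (rule bind_pmf_cong[OF refl])
    apply (subst bind_commute_pmf)
    apply (rule bind_pmf_cong[OF refl])
    apply (subst bind_commute_pmf)
    apply (rule refl)
    done
  also have "\<dots> = bind_pmf (Bl m \<sigma> n) (\<lambda>g. bind_pmf m (\<lambda>s. bind_pmf (\<sigma> g s) (\<lambda>a. 
      map_pmf (mk (g @ [(s,a)])) (bs \<tau> (map snd g @ [a]) (Suc n)))))"
    apply (intro bind_pmf_cong refl)
    apply (simp add: Bl_len bs_snoc map_bind_pmf map_pmf_comp del: bs.simps(2))
    done
  also have "\<dots> = bind_pmf (Bl m \<sigma> (Suc n)) (\<lambda>g. map_pmf (mk g) (bs \<tau> (map snd g) (Suc n)))"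
    by (simp add: bind_assoc_pmf bind_map_pmf)
  finally show ?case .
qed



lemma proj_mk: assumes "length g = length bl" "g \<noteq> []"
  shows "proj (mk g bl) = (fst (last g), last bl)"
proof -
  have bl: "bl \<noteq> []" using assms by auto
  obtain g' x where g: "g = g' @ [x]" using assms(2) by (metis rev_exhaust)
  obtain bl' b where b: "bl = bl' @ [b]" using bl by (metis rev_exhaust)
  have "length g' = length bl'" using assms g b by simp
  then show ?thesis using g b by (cases x) (simp add: mk_facts)
qed

lemma A3: assumes "length as = Suc n"
  shows "map_pmf last (bs (rho \<tau>) as (Suc n)) = map_pmf last (bs \<tau> as (Suc n))"
proof -
  have tk: "take n as @ [as ! n] = as" using assms
    by (metis lessI take_Suc_conv_app_nth take_all order_refl)
  have "map_pmf last (bs (rho \<tau>) as (Suc n)) = bind_pmf (bs (rho \<tau>) as n) (\<lambda>bl. rho \<tau> (zip (take n as) bl) (as ! n))"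
    by (simp add: map_bind_pmf map_pmf_comp)
  also have "\<dots> = bind_pmf (bs (rho \<tau>) as n) (\<lambda>bl. map_pmf last (bs \<tau> as (Suc n)))"
  proof (rule bind_pmf_cong[OF refl])
    fix bl assume "bl \<in> set_pmf (bs (rho \<tau>) as n)"
    then have "length bl = n" by (rule bs_len)
    then have "map fst (zip (take n as) bl) = take n as" "length (zip (take n as) bl) = n"
      using assms by auto
    then show "rho \<tau> (zip (take n as) bl) (as ! n) = map_pmf last (bs \<tau> as (Suc n))"
      unfolding rho_def using tk by simp
  qed
  finally show ?thesis by simp
qed

lemma A2: "map_pmf proj (hist m (lift_blind \<sigma>) \<tau> (Suc n)) =
   bind_pmf (Bl m \<sigma> (Suc n)) (\<lambda>g. map_pmf (\<lambda>b. (fst (last g), b)) (map_pmf last (bs \<tau> (map snd g) (Suc n))))"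
  unfolding hist_blind map_bind_pmf map_pmf_comp
proof (rule bind_pmf_cong[OF refl])
  fix g assume g: "g \<in> set_pmf (Bl m \<sigma> (Suc n))"
  show "map_pmf (\<lambda>x. proj (mk g x)) (bs \<tau> (map snd g) (Suc n)) = map_pmf (\<lambda>x. (fst (last g), last x)) (bs \<tau> (map snd g) (Suc n))"
  proof (rule map_pmf_cong[OF refl])
    fix bl assume "bl \<in> set_pmf (bs \<tau> (map snd g) (Suc n))"
    then have "length bl = Suc n" by (rule bs_len)
    moreover have "length g = Suc n" using g by (rule Bl_len)
    ultimately show "proj (mk g bl) = (fst (last g), last bl)"
      by (intro proj_mk) auto
  qed
qed

lemma A: "map_pmf proj (hist m (lift_blind \<sigma>) (rho \<tau>) (Suc n)) = map_pmf proj (hist m (lift_blind \<sigma>) \<tau> (Suc n))"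
  unfolding A2
proof (rule bind_pmf_cong[OF refl])
  fix g assume g: "g \<in> set_pmf (Bl m \<sigma> (Suc n))"
  then have "length (map snd g) = Suc n" using Bl_len by auto
  then show "map_pmf (\<lambda>b. (fst (last g), b)) (map_pmf last (bs (rho \<tau>) (map snd g) (Suc n))) =
         map_pmf (\<lambda>b. (fst (last g), b)) (map_pmf last (bs \<tau> (map snd g) (Suc n)))"
    by (simp only: A3)
qed

lemma stage_eq: fixes f :: "'s \<Rightarrow> 'b \<Rightarrow> real" shows "measure_pmf.expectation (hist m \<sigma> \<tau> (Suc n)) (\<lambda>h. case last h of (s,a,b) \<Rightarrow> f s b)
   = measure_pmf.expectation (map_pmf proj (hist m \<sigma> \<tau> (Suc n))) (\<lambda>(s,b). f s b)"
  apply (subst integral_map_pmf)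
  apply (rule arg_cong[where f="measure_pmf.expectation _"])
  apply (auto simp: proj_def split: prod.split)
  done

lemma disc_eq:
  assumes "\<And>n. map_pmf proj (hist m \<sigma> \<tau> (Suc n)) = map_pmf proj (hist m \<sigma>' \<tau>' (Suc n))"
  shows "disc_payoff m \<sigma> \<tau> \<delta> f = disc_payoff m \<sigma>' \<tau>' \<delta> f"
  unfolding disc_payoff_def stage_eq assms ..

lemma rho_msg: "rho \<tau> ab a = (\<lambda>as a. map_pmf last (bs \<tau> (as @ [a]) (Suc (length as)))) (map fst ab) a"
  by (simp add: rho_def)

theorem proposition2:
  fixes m :: "'s::finite pmf" and u1 u2 :: "'s \<Rightarrow> 'b::finite \<Rightarrow> real" and \<delta> :: real
  assumes "0 < \<delta>" and "\<delta> < 1"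
  shows "NE_blind_payoffs m u1 u2 \<delta> \<subseteq> NE_payoffs m u1 u2 \<delta>"
proof
  fix p assume "p \<in> NE_blind_payoffs m u1 u2 \<delta>"
  then obtain \<sigma> \<tau> where p: "p = (disc_payoff m (lift_blind \<sigma>) \<tau> \<delta> u1, disc_payoff m (lift_blind \<sigma>) \<tau> \<delta> u2)"
    and ne: "is_NE_blind m u1 u2 \<delta> \<sigma> \<tau>" unfolding NE_blind_payoffs_def by blast
  have eqA: "\<And>\<sigma>0 f. disc_payoff m (lift_blind \<sigma>0) (rho \<tau>) \<delta> f = disc_payoff m (lift_blind \<sigma>0) \<tau> \<delta> f"
    by (rule disc_eq) (rule A)
  have eqB: "\<And>\<sigma>' f. disc_payoff m \<sigma>' (rho \<tau>) \<delta> f = disc_payoff m (lift_blind (kuhn m \<sigma>' (rho \<tau>))) (rho \<tau>) \<delta> f"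
    by (rule disc_eq) (rule proj_B, rule rho_msg)
  have "is_NE m u1 u2 \<delta> (lift_blind \<sigma>) (rho \<tau>)"
    unfolding is_NE_def
  proof (intro conjI allI)
    fix \<sigma>'
    show "disc_payoff m \<sigma>' (rho \<tau>) \<delta> u1 \<le> disc_payoff m (lift_blind \<sigma>) (rho \<tau>) \<delta> u1"
      using ne unfolding is_NE_blind_def eqB[of \<sigma>'] eqA by blast
  next
    fix \<tau>'
    show "disc_payoff m (lift_blind \<sigma>) \<tau>' \<delta> u2 \<le> disc_payoff m (lift_blind \<sigma>) (rho \<tau>) \<delta> u2"
      using ne unfolding is_NE_blind_def eqA by blast
  qed
  then show "p \<in> NE_payoffs m u1 u2 \<delta>"
    unfolding NE_payoffs_def p eqA[symmetric] by blast
qed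


end
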